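(* Let $(x_0,y_0)\in\{(\tfrac{\pi}{4},-\tfrac{3\pi}{4}),\,(\tfrac{3\pi}{4},-\tfrac{\pi}{4})\}$ and let $U\subset\mathbb{R}^2$ be an open neighborhood of $(x_0,y_0)$. Let $\mathcal{A},\mathcal{B}:U\to[-1,1]$ be functions that are differentiable at $(x_0,y_0)$ and satisfy $\mathcal{A}(x_0,y_0)=\mathcal{B}(x_0,y_0)=0$ and $\nabla(\mathcal{A}-\mathcal{B})(x_0,y_0)\neq 0$ (i.e. $(x_0,y_0)$ is not a critical point of $\mathcal{A}-\mathcal{B}$). For $(x,y)\in\mathbb{R}^2$ put $C(x,y)=-\cos(x-y)$. Then there exist real numbers $\mu\neq 0$, $\nu\neq 0$ and $\epsilon_0>0$ such that for every $\epsilon\in(0,\epsilon_0)$, at the point $(x,y)=(x_0+\mu\epsilon,\,y_0+\nu\epsilon)$ at least one of the two inequalities $$|C(x,y)+\mathcal{A}(x,y)|+|\mathcal{B}(x,y)-C(x,y)|\le 2,\qquad |C(x,y)-\mathcal{A}(x,y)|+|\mathcal{B}(x,y)+C(x,y)|\le 2$$ is false.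
   Context: Physical interpretation (not needed for the mathematics): $(x,y)=(\theta_{\bm a},\theta_{\bm b})$ parametrizes quadruplets of measurement directions in a plane with $\theta_{\bm a'}=-\theta_{\bm a}$, $\theta_{\bm b'}=-\theta_{\bm b}$; $C$ is the quantum correlation $\langle a,b\rangle=\langle a',b'\rangle=-\cos(\theta_{\bm a}-\theta_{\bm b})$, $\mathcal{A}=\langle a,a'\rangle$, $\mathcal{B}=\langle b,b'\rangle$, and the two displayed inequalities are the "Boole inequalities" $|\langle a,b\rangle\pm\langle a,a'\rangle|+|\langle b',b\rangle\mp\langle b',a'\rangle|\le 2$, which hold for correlations of $\{-1,1\}$-valued sequences. The conclusion thus says that these assumptions on $\mathcal{A},\mathcal{B}$ are incompatible with the Boole inequalities. *)

theory Defs
  imports "HOL-Analysis.Analysis"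
begin

definition Corr :: "real \<Rightarrow> real \<Rightarrow> real" where
  "Corr x y = - cos (x - y)"

end

theory Submission
  imports Defs
begin

theorem claim2:
  fixes x0 y0 :: real and U :: "(real \<times> real) set"
    and A B :: "real \<times> real \<Rightarrow> real"
  assumes pt: "(x0, y0) \<in> {(pi/4, -3*pi/4), (3*pi/4, -pi/4)}"
    and U_open: "open U" and in_U: "(x0, y0) \<in> U"
    and A_range: "\<forall>p\<in>U. A p \<in> {-1..1}"
    and B_range: "\<forall>p\<in>U. B p \<in> {-1..1}"
    and A_diff: "A differentiable (at (x0, y0))"
    and B_diff: "B differentiable (at (x0, y0))"
    and A0: "A (x0, y0) = 0" and B0: "B (x0, y0) = 0"
    and noncrit: "frechet_derivative (\<lambda>p. A p - B p) (at (x0, y0)) \<noteq> (\<lambda>h. 0)"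
  shows "\<exists>\<mu> \<nu> \<epsilon>0. \<mu> \<noteq> 0 \<and> \<nu> \<noteq> 0 \<and> \<epsilon>0 > 0 \<and>
    (\<forall>\<epsilon>. 0 < \<epsilon> \<and> \<epsilon> < \<epsilon>0 \<longrightarrow>
      (let x = x0 + \<mu> * \<epsilon>; y = y0 + \<nu> * \<epsilon> in
        (x, y) \<in> U \<and>
        \<not> (\<bar>Corr x y + A (x, y)\<bar> + \<bar>B (x, y) - Corr x y\<bar> \<le> 2 \<and>
             \<bar>Corr x y - A (x, y)\<bar> + \<bar>B (x, y) + Corr x y\<bar> \<le> 2)))"
proof -
  define p where "p = (x0, y0)"
  define L where "L = frechet_derivative (\<lambda>p. A p - B p) (at (x0, y0))"
  have dd: "(\<lambda>p. A p - B p) differentiable (at (x0, y0))"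
    using A_diff B_diff by (rule differentiable_diff)
  have Lder: "((\<lambda>p. A p - B p) has_derivative L) (at (x0, y0))"
    unfolding L_def using dd frechet_derivative_works by blast
  have lin: "linear L" using Lder has_derivative_linear by blast
  define a where "a = L (1,0)"
  define b where "b = L (0,1)"
  have Lform: "L (h1, h2) = h1 * a + h2 * b" for h1 h2
  proof -
    have "(h1, h2) = h1 *\<^sub>R (1,0) + h2 *\<^sub>R (0,1)" by simp
    then have "L (h1,h2) = L (h1 *\<^sub>R (1,0) + h2 *\<^sub>R (0,1))" by simp
    also have "\<dots> = h1 *\<^sub>R L (1,0) + h2 *\<^sub>R L (0,1)"
      by (simp only: linear_add[OF lin] linear_scale[OF lin])
    also have "\<dots> = h1 * a + h2 * b" unfolding a_def b_def by simp
    finally show ?thesis .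
  qed
  have ab: "a \<noteq> 0 \<or> b \<noteq> 0"
  proof (rule ccontr)
    assume "\<not> (a \<noteq> 0 \<or> b \<noteq> 0)"
    then have "L = (\<lambda>h. 0)" by (auto simp: Lform fun_eq_iff)
    with noncrit show False unfolding L_def by simp
  qed
  obtain \<mu> \<nu> :: real where mn: "\<mu> \<noteq> 0" "\<nu> \<noteq> 0" "\<mu> * a + \<nu> * b \<noteq> 0"
  proof (cases "a + b = 0")
    case True
    then show ?thesis using ab that[of 1 2] by auto
  next
    case False
    then show ?thesis using that[of 1 1] by auto
  qed
  define D where "D = \<mu> * a + \<nu> * b"
  have Dpos: "\<bar>D\<bar> > 0" using mn D_def by simp
  define g where "g = (\<lambda>e::real. A (x0 + \<mu> * e, y0 + \<nu> * e) - B (x0 + \<mu> * e, y0 + \<nu> * e))"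
  have path: "((\<lambda>e::real. (x0 + \<mu> * e, y0 + \<nu> * e)) has_derivative (\<lambda>e. (\<mu> * e, \<nu> * e))) (at 0)"
    by (auto intro!: derivative_eq_intros)
  have "(g has_derivative (\<lambda>e. L (\<mu> * e, \<nu> * e))) (at 0)"
  proof -
    have "((\<lambda>p. A p - B p) has_derivative L) (at ((\<lambda>e::real. (x0 + \<mu> * e, y0 + \<nu> * e)) 0))"
      using Lder by simp
    from has_derivative_compose[OF path this] show ?thesis
      unfolding g_def o_def by simp
  qed
  moreover have "(\<lambda>e. L (\<mu> * e, \<nu> * e)) = (*) D"
    by (auto simp: fun_eq_iff Lform D_def algebra_simps)
  ultimately have "(g has_field_derivative D) (at 0)"
    by (simp add: has_field_derivative_def)
  have g0: "g 0 = 0" using A0 B0 g_def by simp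
  have gl: "((\<lambda>e. g e / e) \<longlongrightarrow> D) (at 0)"
    using has_field_derivative_iff[THEN iffD1, OF \<open>(g has_field_derivative D) (at 0)\<close>] g0 by simp
  have cd: "((\<lambda>e. cos ((\<mu> - \<nu>) * e)) has_field_derivative 0) (at 0)"
    by (auto intro!: derivative_eq_intros)
  have cl: "((\<lambda>e. (cos ((\<mu> - \<nu>) * e) - 1) / e) \<longlongrightarrow> 0) (at 0)"
    using has_field_derivative_iff[THEN iffD1, OF cd] by simp
  have ev1: "eventually (\<lambda>e. \<bar>g e / e - D\<bar> < \<bar>D\<bar>/2) (at 0)"
    using gl Dpos unfolding tendsto_iff dist_real_def by (meson half_gt_zero)
  have ev2: "eventually (\<lambda>e. \<bar>(cos ((\<mu> - \<nu>) * e) - 1) / e\<bar> < \<bar>D\<bar>/4) (at 0)"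
  proof -
    have "\<bar>D\<bar>/4 > 0" using Dpos by simp
    then show ?thesis using cl[unfolded tendsto_iff dist_real_def, rule_format, of "\<bar>D\<bar>/4"]
      by (simp only: diff_zero)
  qed
  have "((\<lambda>e::real. (x0 + \<mu> * e, y0 + \<nu> * e)) \<longlongrightarrow> (x0, y0)) (at 0)"
    by (auto intro!: tendsto_eq_intros)
  then have ev3: "eventually (\<lambda>e. (x0 + \<mu> * e, y0 + \<nu> * e) \<in> U) (at 0)"
    using U_open in_U unfolding tendsto_def by blast
  have "eventually (\<lambda>e. \<bar>g e / e - D\<bar> < \<bar>D\<bar>/2 \<and> \<bar>(cos ((\<mu> - \<nu>) * e) - 1) / e\<bar> < \<bar>D\<bar>/4
     \<and> (x0 + \<mu> * e, y0 + \<nu> * e) \<in> U) (at 0)"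
    using ev1 ev2 ev3 by eventually_elim auto
  then obtain d where d: "d > 0" and dP: "\<And>e. e \<noteq> 0 \<Longrightarrow> dist e 0 < d \<Longrightarrow>
      \<bar>g e / e - D\<bar> < \<bar>D\<bar>/2 \<and> \<bar>(cos ((\<mu> - \<nu>) * e) - 1) / e\<bar> < \<bar>D\<bar>/4
     \<and> (x0 + \<mu> * e, y0 + \<nu> * e) \<in> U"
    unfolding eventually_at by blast
  have xy: "x0 - y0 = pi" using pt by auto
  have Cf: "Corr (x0 + \<mu> * e) (y0 + \<nu> * e) = cos ((\<mu> - \<nu>) * e)" for e
  proof -
    have "x0 + \<mu> * e - (y0 + \<nu> * e) = pi + (\<mu> - \<nu>) * e" using xy by (simp add: algebra_simps)
    then show ?thesis unfolding Corr_def by (simp add: cos_add)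
  qed
  show ?thesis
  proof (intro exI conjI allI impI)
    show "\<mu> \<noteq> 0" "\<nu> \<noteq> 0" "d > 0" using mn d by auto
    fix e :: real assume e: "0 < e \<and> e < d"
    then have P: "\<bar>g e / e - D\<bar> < \<bar>D\<bar>/2" "\<bar>(cos ((\<mu> - \<nu>) * e) - 1) / e\<bar> < \<bar>D\<bar>/4"
      "(x0 + \<mu> * e, y0 + \<nu> * e) \<in> U" using dP[of e] by auto
    have "\<bar>g e - e * D\<bar> < e * \<bar>D\<bar>/2"
    proof -
      have "\<bar>g e - e * D\<bar> = e * \<bar>g e / e - D\<bar>" using e
        by (simp add: abs_mult[symmetric] field_simps)
      also have "\<dots> < e * (\<bar>D\<bar>/2)" using P(1) e by simp
      finally show ?thesis by simp
    qed
    moreover have "e * \<bar>D\<bar> = \<bar>e * D\<bar>" using e by (simp add: abs_mult)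
    ultimately have G: "\<bar>g e\<bar> > e * \<bar>D\<bar>/2" by linarith
    have "\<bar>cos ((\<mu> - \<nu>) * e) - 1\<bar> < e * \<bar>D\<bar>/4"
    proof -
      have "\<bar>cos ((\<mu> - \<nu>) * e) - 1\<bar> = e * \<bar>(cos ((\<mu> - \<nu>) * e) - 1) / e\<bar>" using e
        by (simp add: abs_mult[symmetric] field_simps)
      also have "\<dots> < e * (\<bar>D\<bar>/4)" using P(2) e by (intro mult_strict_left_mono) auto
      finally show ?thesis by simp
    qed
    then have K: "2 - 2 * cos ((\<mu> - \<nu>) * e) < \<bar>g e\<bar>" using G by linarith
    show "let x = x0 + \<mu> * e; y = y0 + \<nu> * e in
        (x, y) \<in> U \<and>
        \<not> (\<bar>Corr x y + A (x, y)\<bar> + \<bar>B (x, y) - Corr x y\<bar> \<le> 2 \<and>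
             \<bar>Corr x y - A (x, y)\<bar> + \<bar>B (x, y) + Corr x y\<bar> \<le> 2)"
      unfolding Let_def Cf using P(3) K unfolding g_def by linarith
  qed
qed

end
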